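(* In the setting of problem (P) under the standing assumptions, run Algorithm LCPG. Then: (1) the sequence $\{x^k\}$ is well defined (each subproblem has a nonempty feasible set intersected with $\mathrm{dom}\,\chi_0$), every $x^k$ is feasible for (P), and for every $k\ge0$ $$\tfrac{L_0}{2}\|x^{k+1}-x^k\|^2\le\psi_0(x^k)-\psi_0(x^{k+1});$$ in particular $\{\psi_0(x^k)\}$ is monotonically nonincreasing and $\lim_{k\to\infty}\psi_0(x^k)$ exists. (2) For every $k$ there exists a Lagrange multiplier $\lambda^{k+1}\in\mathbb{R}^m_+$ of the $k$-th subproblem.
   Context: Problem (P): minimize $\psi_0(x):=f_0(x)+\chi_0(x)$ over $x\in\mathbb{R}^d$ subject to $\psi_i(x):=f_i(x)+\chi_i(x)\le\eta_i$, $i\in[m]:=\{1,\dots,m\}$. Standing assumptions: $\chi_0$ is proper, convex, lower semicontinuous; each $\chi_i$ ($i\in[m]$) is convex and continuous on $\mathrm{dom}\,\chi_0$; each $f_i$ ($i=0,\dots,m$) is differentiable with $L_i$-Lipschitz gradient on $\mathrm{dom}\,\chi_0$; $L:=(L_1,\dots,L_m)^\top$; the optimal value $\psi_0^*$ of (P) is finite; the feasible set $\mathcal{X}:=\{x\in\mathrm{dom}\,\chi_0:\psi_i(x)\le\eta_i,\ i\in[m]\}$ is nonempty and compact. Write $\psi=(\psi_1,\dots,\psi_m)^\top$, $\eta=(\eta_1,\dots,\eta_m)^\top$; vector inequalities are componentwise. Subdifferential: $\partial\psi_i(x):=\nabla f_i(x)+\partial\chi_i(x)$ (convex subdifferential of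 $\chi_i$, Minkowski sum). Lagrangian $\mathcal{L}(x,\lambda)=\psi_0(x)+\sum_{i=1}^m\lambda_i(\psi_i(x)-\eta_i)$ and $\partial_x\mathcal{L}(x,\lambda):=\partial\psi_0(x)+\sum_i\lambda_i\partial\psi_i(x)$. For a set $S$, $\|S\|_-:=\inf\{\|s\|:s\in S\}$. Algorithm LCPG: given $x^0\in\mathrm{dom}\,\chi_0$ and $\eta^0\in\mathbb{R}^m$ with $\psi(x^0)<\eta^0<\eta$. For $k=0,1,\dots$: define for $i=0,\dots,m$ the function $\psi_i^k(x):=f_i(x^k)+\langle\nabla f_i(x^k),x-x^k\rangle+\frac{L_i}{2}\|x-x^k\|^2+\chi_i(x)$; let $x^{k+1}$ be the minimizer of $\psi_0^k(x)$ subject to $\psi_i^k(x)\le\eta_i^k$, $i\in[m]$ (the $k$-th subproblem); set $\eta^{k+1}=\eta^k+\delta^k$ with $\delta^k\in\mathbb{R}^m$, $\delta^k>0$, chosen so that $\eta^{k+1}<\eta$. A vector $\lambda^{k+1}\in\mathbb{R}^m_+$ is a Lagrange multiplier of the $k$-th subproblem if $0\in\partial\psi_0^k(x^{k+1})+\sum_i\lambda_i^{k+1}\partial\psi_i^k(x^{k+1})$ and $\lambda_i^{k+1}(\psi_i^k(x^{k+1})-\eta_i^k)=0$ for all $i\in[m]$, where $\partial\psi_i^k(x)=\nabla f_i(x^k)+L_i(x-x^k)+\partial\chi_i(x)$. *)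

theory Defs
  imports "HOL-Analysis.Analysis"
begin

definition edom :: "('a \<Rightarrow> ereal) \<Rightarrow> 'a set" where
  "edom h = {x. h x \<noteq> \<infinity>}"

definition proper_fun :: "('a \<Rightarrow> ereal) \<Rightarrow> bool" where
  "proper_fun h \<longleftrightarrow> (\<forall>x. h x \<noteq> -\<infinity>) \<and> edom h \<noteq> {}"

definition econvex :: "('a::real_vector \<Rightarrow> ereal) \<Rightarrow> bool" where
  "econvex h \<longleftrightarrow> convex (edom h) \<and> convex_on (edom h) (\<lambda>x. real_of_ereal (h x))"

definition elsc :: "('a::topological_space \<Rightarrow> ereal) \<Rightarrow> bool" where
  "elsc h \<longleftrightarrow> (\<forall>c::ereal. closed {x. h x \<le> c})"

definition esubdiff :: "('a::real_inner \<Rightarrow> ereal) \<Rightarrow> 'a \<Rightarrow> 'a set" where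
  "esubdiff h x = {g. \<forall>y. h x + ereal (g \<bullet> (y - x)) \<le> h y}"

definition psi0 :: "(nat \<Rightarrow> 'a \<Rightarrow> real) \<Rightarrow> ('a \<Rightarrow> ereal) \<Rightarrow> 'a \<Rightarrow> ereal" where
  "psi0 f chi0 x = ereal (f 0 x) + chi0 x"

definition psi :: "(nat \<Rightarrow> 'a \<Rightarrow> real) \<Rightarrow> (nat \<Rightarrow> 'a \<Rightarrow> real) \<Rightarrow> nat \<Rightarrow> 'a \<Rightarrow> real" where
  "psi f chi i x = f i x + chi i x"

definition feas_set ::
  "(nat \<Rightarrow> 'a \<Rightarrow> real) \<Rightarrow> ('a \<Rightarrow> ereal) \<Rightarrow> (nat \<Rightarrow> 'a \<Rightarrow> real) \<Rightarrow> (nat \<Rightarrow> real) \<Rightarrow> nat \<Rightarrow> 'a set" where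
  "feas_set f chi0 chi eta m = {x \<in> edom chi0. \<forall>i\<in>{1..m}. psi f chi i x \<le> eta i}"

definition qmodel ::
  "(nat \<Rightarrow> 'a::real_inner \<Rightarrow> real) \<Rightarrow> (nat \<Rightarrow> 'a \<Rightarrow> 'a) \<Rightarrow> (nat \<Rightarrow> real) \<Rightarrow> 'a \<Rightarrow> nat \<Rightarrow> 'a \<Rightarrow> real" where
  "qmodel f gradf L xk i x = f i xk + gradf i xk \<bullet> (x - xk) + L i / 2 * (norm (x - xk))\<^sup>2"

definition psi0k ::
  "(nat \<Rightarrow> 'a::real_inner \<Rightarrow> real) \<Rightarrow> (nat \<Rightarrow> 'a \<Rightarrow> 'a) \<Rightarrow> (nat \<Rightarrow> real) \<Rightarrow> ('a \<Rightarrow> ereal) \<Rightarrow> 'a \<Rightarrow> 'a \<Rightarrow> ereal" where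
  "psi0k f gradf L chi0 xk x = ereal (qmodel f gradf L xk 0 x) + chi0 x"

definition psik ::
  "(nat \<Rightarrow> 'a::real_inner \<Rightarrow> real) \<Rightarrow> (nat \<Rightarrow> 'a \<Rightarrow> 'a) \<Rightarrow> (nat \<Rightarrow> real) \<Rightarrow> (nat \<Rightarrow> 'a \<Rightarrow> real) \<Rightarrow> 'a \<Rightarrow> nat \<Rightarrow> 'a \<Rightarrow> real" where
  "psik f gradf L chi xk i x = qmodel f gradf L xk i x + chi i x"

definition sub_feas ::
  "(nat \<Rightarrow> 'a::real_inner \<Rightarrow> real) \<Rightarrow> (nat \<Rightarrow> 'a \<Rightarrow> 'a) \<Rightarrow> (nat \<Rightarrow> real) \<Rightarrow> ('a \<Rightarrow> ereal) \<Rightarrow>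
    (nat \<Rightarrow> 'a \<Rightarrow> real) \<Rightarrow> nat \<Rightarrow> 'a \<Rightarrow> (nat \<Rightarrow> real) \<Rightarrow> 'a set" where
  "sub_feas f gradf L chi0 chi m xk etak =
     {z \<in> edom chi0. \<forall>i\<in>{1..m}. psik f gradf L chi xk i z \<le> etak i}"

definition sub_min ::
  "(nat \<Rightarrow> 'a::real_inner \<Rightarrow> real) \<Rightarrow> (nat \<Rightarrow> 'a \<Rightarrow> 'a) \<Rightarrow> (nat \<Rightarrow> real) \<Rightarrow> ('a \<Rightarrow> ereal) \<Rightarrow>
    (nat \<Rightarrow> 'a \<Rightarrow> real) \<Rightarrow> nat \<Rightarrow> 'a \<Rightarrow> (nat \<Rightarrow> real) \<Rightarrow> 'a \<Rightarrow> bool" where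
  "sub_min f gradf L chi0 chi m xk etak z \<longleftrightarrow>
     z \<in> sub_feas f gradf L chi0 chi m xk etak \<and>
     (\<forall>y \<in> sub_feas f gradf L chi0 chi m xk etak.
        psi0k f gradf L chi0 xk z \<le> psi0k f gradf L chi0 xk y)"

text \<open>lam is a Lagrange multiplier of the subproblem (centre xk, levels etak) at its solution z:
  lam \<ge> 0, 0 \<in> d psi_0^k(z) + sum_i lam_i d psi_i^k(z) (Minkowski sum, unfolded via a
  choice of subgradients g_i), and complementary slackness.\<close>
definition sub_multiplier ::
  "(nat \<Rightarrow> 'a::real_inner \<Rightarrow> real) \<Rightarrow> (nat \<Rightarrow> 'a \<Rightarrow> 'a) \<Rightarrow> (nat \<Rightarrow> real) \<Rightarrow> ('a \<Rightarrow> ereal) \<Rightarrow>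
    (nat \<Rightarrow> 'a \<Rightarrow> real) \<Rightarrow> nat \<Rightarrow> 'a \<Rightarrow> (nat \<Rightarrow> real) \<Rightarrow> 'a \<Rightarrow> (nat \<Rightarrow> real) \<Rightarrow> bool" where
  "sub_multiplier f gradf L chi0 chi m xk etak z lam \<longleftrightarrow>
     (\<forall>i\<in>{1..m}. 0 \<le> lam i) \<and>
     (\<exists>g0 \<in> esubdiff chi0 z. \<exists>g. (\<forall>i\<in>{1..m}. g i \<in> esubdiff (\<lambda>y. ereal (chi i y)) z) \<and>
        (gradf 0 xk + L 0 *\<^sub>R (z - xk) + g0)
        + (\<Sum>i\<in>{1..m}. lam i *\<^sub>R (gradf i xk + L i *\<^sub>R (z - xk) + g i)) = 0) \<and>
     (\<forall>i\<in>{1..m}. lam i * (psik f gradf L chi xk i z - etak i) = 0)"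

end

theory Submission
  imports Defs
begin


lemma sq_comb:
  fixes u v :: "'a::real_inner"
  shows "(norm ((1-t) *\<^sub>R u + t *\<^sub>R v))\<^sup>2 = (1-t) * (norm u)\<^sup>2 + t * (norm v)\<^sup>2 - t*(1-t) * (norm (u - v))\<^sup>2"
  unfolding power2_norm_eq_inner
  by (simp add: inner_add_left inner_add_right inner_diff_left inner_diff_right inner_commute ring_distribs)

lemma quad_expand:
  fixes y z c p :: "'a::real_inner"
  shows "b + p \<bullet> (y - c) + a/2 * (norm (y - c))\<^sup>2 =
     b + p \<bullet> (z - c) + a/2 * (norm (z - c))\<^sup>2 + (p + a *\<^sub>R (z - c)) \<bullet> (y - z) + a/2 * (norm (y - z))\<^sup>2"
  unfolding power2_norm_eq_inner
  by (simp add: inner_add_left inner_add_right inner_diff_left inner_diff_right inner_commute ring_distribs)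

lemma convex_on_sqdist:
  fixes c :: "'a::real_inner"
  assumes "0 \<le> a"
  shows "convex_on UNIV (\<lambda>y. a/2 * (norm (y - c))\<^sup>2)"
proof (rule convex_onI)
  fix x y :: 'a and t :: real assume t: "0 < t" "t < 1"
  have e: "(1 - t) *\<^sub>R x + t *\<^sub>R y - c = (1-t) *\<^sub>R (x - c) + t *\<^sub>R (y - c)"
    by (simp add: algebra_simps)
  have "(norm ((1 - t) *\<^sub>R x + t *\<^sub>R y - c))\<^sup>2 \<le> (1-t) * (norm (x-c))\<^sup>2 + t * (norm (y-c))\<^sup>2"
    unfolding e sq_comb using t by simp
  then have "a/2 * (norm ((1 - t) *\<^sub>R x + t *\<^sub>R y - c))\<^sup>2 \<le> a/2 * ((1-t) * (norm (x-c))\<^sup>2 + t * (norm (y-c))\<^sup>2)"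
    using assms by (intro mult_left_mono) auto
  also have "\<dots> = (1 - t) * (a/2 * (norm (x - c))\<^sup>2) + t * (a/2 * (norm (y - c))\<^sup>2)"
    by (simp add: field_simps)
  finally show "a/2 * (norm ((1 - t) *\<^sub>R x + t *\<^sub>R y - c))\<^sup>2 \<le> (1 - t) * (a/2 * (norm (x - c))\<^sup>2) + t * (a/2 * (norm (y - c))\<^sup>2)"
    .
qed simp

lemma convex_on_linear_inner:
  fixes p :: "'a::real_inner"
  shows "convex_on UNIV (\<lambda>y. b + p \<bullet> (y - c))"
  by (rule convex_onI) (auto simp: inner_add_right inner_diff_right algebra_simps)

lemma convex_on_qm:
  fixes p c :: "'a::real_inner"
  assumes "0 \<le> a"
  shows "convex_on UNIV (\<lambda>y. b + p \<bullet> (y - c) + a/2 * (norm (y - c))\<^sup>2)"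
  using convex_on_add[OF convex_on_linear_inner convex_on_sqdist[OF assms]] by simp

lemma descent:
  fixes f :: "'a::real_inner \<Rightarrow> real" and g :: "'a \<Rightarrow> 'a"
  assumes D: "convex D" and x: "x \<in> D" and y: "y \<in> D"
    and der: "\<forall>u\<in>D. (f has_derivative (\<lambda>h. g u \<bullet> h)) (at u)"
    and lip: "L-lipschitz_on D g"
  shows "f y \<le> f x + g x \<bullet> (y - x) + L/2 * (norm (y - x))\<^sup>2"
proof -
  define d where "d = y - x"
  define \<phi> where "\<phi> t = f (x + t *\<^sub>R d) - t * (g x \<bullet> d) - L/2 * t\<^sup>2 * (norm d)\<^sup>2" for t
  have xt: "x + t *\<^sub>R d \<in> D" if "0 \<le> t" "t \<le> 1" for t
  proof -
    have "x + t *\<^sub>R d = (1 - t) *\<^sub>R x + t *\<^sub>R y" by (simp add: d_def algebra_simps)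
    then show ?thesis using convexD_alt[OF D x y] that by simp
  qed
  have "\<phi> 1 \<le> \<phi> 0"
  proof (rule DERIV_nonpos_imp_nonincreasing[where f=\<phi> and a=0 and b=1])
    fix t :: real assume t: "0 \<le> t" "t \<le> 1"
    have "((\<lambda>s. f (x + s *\<^sub>R d)) has_derivative (\<lambda>s. g (x + t *\<^sub>R d) \<bullet> (s *\<^sub>R d))) (at t)"
      by (rule has_derivative_compose[where f="\<lambda>s. x + s *\<^sub>R d", OF _ der[rule_format, OF xt[OF t]]])
         (auto intro!: derivative_eq_intros)
    then have d1: "((\<lambda>s. f (x + s *\<^sub>R d)) has_real_derivative (g (x + t *\<^sub>R d) \<bullet> d)) (at t)"
      unfolding has_field_derivative_def by (simp add: mult.commute[of _ "g (x + t *\<^sub>R d) \<bullet> d"])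
    have d2: "(\<phi> has_real_derivative (g (x + t *\<^sub>R d) \<bullet> d - g x \<bullet> d - L/2 * (2 * t) * (norm d)\<^sup>2)) (at t)"
      unfolding \<phi>_def
      by (rule derivative_eq_intros d1 refl | simp)+
    have L0: "0 \<le> L" using lip by (simp add: lipschitz_on_def)
    have "g (x + t *\<^sub>R d) \<bullet> d - g x \<bullet> d = (g (x + t *\<^sub>R d) - g x) \<bullet> d" by (simp add: inner_diff_left)
    also have "\<dots> \<le> norm (g (x + t *\<^sub>R d) - g x) * norm d" by (rule norm_cauchy_schwarz)
    also have "norm (g (x + t *\<^sub>R d) - g x) \<le> L * dist (x + t *\<^sub>R d) x"
      using lip xt[OF t] x unfolding lipschitz_on_def by (metis dist_norm)
    also have "dist (x + t *\<^sub>R d) x = t * norm d" using t by (simp add: dist_norm)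
    finally have "g (x + t *\<^sub>R d) \<bullet> d - g x \<bullet> d \<le> L * (t * norm d) * norm d"
      by (simp add: mult_right_mono)
    then have "g (x + t *\<^sub>R d) \<bullet> d - g x \<bullet> d - L/2 * (2 * t) * (norm d)\<^sup>2 \<le> 0"
      by (simp add: power2_eq_square algebra_simps)
    then show "\<exists>y. (\<phi> has_real_derivative y) (at t) \<and> y \<le> 0" using d2 by blast
  qed simp
  then show ?thesis by (simp add: \<phi>_def d_def)
qed

lemma small_pos_le:
  fixes E R :: real
  assumes "\<And>t. 0 < t \<Longrightarrow> t \<le> 1 \<Longrightarrow> 0 \<le> E + t * R"
  shows "0 \<le> E"
proof (rule ccontr)
  assume E: "\<not> 0 \<le> E"
  define t where "t = min 1 ((-E) / (2 * (\<bar>R\<bar> + 1)))"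
  have "0 < (-E) / (2 * (\<bar>R\<bar> + 1))" using E by (intro divide_pos_pos) auto
  then have t0: "0 < t" "t \<le> 1" by (auto simp: t_def)
  have "t * R \<le> t * \<bar>R\<bar>" using t0 by (simp add: mult_left_mono)
  also have "t * \<bar>R\<bar> \<le> ((-E) / (2 * (\<bar>R\<bar> + 1))) * \<bar>R\<bar>"
    by (rule mult_right_mono) (auto simp: t_def)
  also have "\<dots> < -E"
  proof -
    have "((-E) / (2 * (\<bar>R\<bar> + 1))) * \<bar>R\<bar> = (-E) * (\<bar>R\<bar> / (2 * (\<bar>R\<bar> + 1)))" by simp
    also have "\<bar>R\<bar> / (2 * (\<bar>R\<bar> + 1)) < 1" by (simp add: divide_less_eq)
    then have "(-E) * (\<bar>R\<bar> / (2 * (\<bar>R\<bar> + 1))) < (-E) * 1"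
      using E by (intro mult_strict_left_mono) auto
    finally show ?thesis by simp
  qed
  finally show False using assms[OF t0] by simp
qed

lemma CL:
  fixes Q h :: "'a::real_inner \<Rightarrow> real"
  assumes S: "convex S" and z: "z \<in> S" and y: "y \<in> S" and h: "convex_on S h"
    and opt: "\<forall>w\<in>S. Q z + h z \<le> Q w + h w"
    and ex: "\<forall>t. Q (z + t *\<^sub>R (y - z)) = Q z + t * (G \<bullet> (y - z)) + t\<^sup>2 * R"
  shows "h z - G \<bullet> (y - z) \<le> h y"
proof -
  have "0 \<le> (G \<bullet> (y - z) + h y - h z) + t * R" if t: "0 < t" "t \<le> 1" for t
  proof -
    have w: "z + t *\<^sub>R (y - z) = (1 - t) *\<^sub>R z + t *\<^sub>R y" by (simp add: algebra_simps)
    have wS: "z + t *\<^sub>R (y - z) \<in> S" unfolding w using convexD_alt[OF S z y] t by simp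
    have hw: "h (z + t *\<^sub>R (y - z)) \<le> (1 - t) * h z + t * h y"
      unfolding w using convex_onD[OF h, of t z y] t z y by simp
    have "Q z + h z \<le> Q (z + t *\<^sub>R (y - z)) + h (z + t *\<^sub>R (y - z))" using opt wS by blast
    then have "0 \<le> t * (G \<bullet> (y - z)) + t\<^sup>2 * R + (1 - t) * h z + t * h y - h z"
      using hw ex by simp
    then have "0 \<le> t * ((G \<bullet> (y - z) + h y - h z) + t * R)"
      by (simp add: algebra_simps power2_eq_square)
    then show ?thesis using t by (simp add: zero_le_mult_iff)
  qed
  then have "0 \<le> G \<bullet> (y - z) + h y - h z" by (rule small_pos_le)
  then show ?thesis by simp
qed

lemma aux_cancel: "(c::real) \<noteq> 0 \<Longrightarrow> c * (a / c * F2 + - b / c * F1) = a * F2 - b * F1"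
  by (simp add: field_simps)

lemma OC_key:
  fixes F G :: "'a::real_vector \<Rightarrow> real"
  assumes D: "convex D" and F: "convex_on D F" and G: "convex_on D G"
    and opt: "\<forall>y\<in>D. G y \<le> 0 \<longrightarrow> F z \<le> F y"
    and y1: "y1 \<in> D" "0 < G y1" and y2: "y2 \<in> D" "G y2 < 0"
  shows "(F z - F y1) / G y1 \<le> (F y2 - F z) / (- G y2)"
proof -
  define t where "t = - G y2 / (G y1 - G y2)"
  have t: "0 \<le> t" "t \<le> 1" using y1 y2 by (auto simp: t_def divide_simps)
  have omt: "1 - t = G y1 / (G y1 - G y2)" using y1 y2 by (simp add: t_def field_simps)
  define w where "w = (1 - t) *\<^sub>R y2 + t *\<^sub>R y1"
  have wD: "w \<in> D" unfolding w_def using convexD_alt[OF D y2(1) y1(1)] t by simp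
  have "G w \<le> (1 - t) * G y2 + t * G y1" unfolding w_def using convex_onD[OF G] t y1 y2 by simp
  also have "(1 - t) * G y2 + t * G y1 = 0" unfolding omt t_def using y1 y2 by (simp add: field_simps)
  finally have "F z \<le> F w" using opt wD by blast
  also have "F w \<le> (1 - t) * F y2 + t * F y1" unfolding w_def using convex_onD[OF F] t y1 y2 by simp
  finally have fz: "F z \<le> (1 - t) * F y2 + t * F y1" .
  have "(G y1 - G y2) * F z \<le> (G y1 - G y2) * ((1 - t) * F y2 + t * F y1)"
    using fz y1 y2 by (intro mult_left_mono) auto
  also have "\<dots> = G y1 * F y2 - G y2 * F y1"
    unfolding omt unfolding t_def using y1 y2 by (intro aux_cancel) simp
  finally have "(G y1 - G y2) * F z \<le> G y1 * F y2 - G y2 * F y1" .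
  then have "(- G y2) * (F z - F y1) \<le> G y1 * (F y2 - F z)" by (simp add: algebra_simps)
  then show ?thesis using y1 y2 by (simp add: divide_simps mult.commute algebra_simps)
qed

lemma OC:
  fixes F G :: "'a::real_vector \<Rightarrow> real"
  assumes D: "convex D" and F: "convex_on D F" and G: "convex_on D G"
    and a: "a \<in> D" "G a < 0" and z: "z \<in> D" "G z \<le> 0"
    and opt: "\<forall>y\<in>D. G y \<le> 0 \<longrightarrow> F z \<le> F y"
  shows "\<exists>\<mu>\<ge>0. \<mu> * G z = 0 \<and> (\<forall>y\<in>D. F z \<le> F y + \<mu> * G y)"
proof -
  define A where "A = insert 0 {(F z - F y) / G y | y. y \<in> D \<and> 0 < G y}"
  define \<mu> where "\<mu> = Sup A"
  have ub: "x \<le> (F y2 - F z) / (- G y2)" if "x \<in> A" "y2 \<in> D" "G y2 < 0" for x y2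
  proof -
    have "F z \<le> F y2" using opt that by auto
    then have "0 \<le> (F y2 - F z) / (- G y2)" using that by (simp add: divide_simps)
    then show ?thesis using that OC_key[OF D F G opt _ _ that(2,3)] unfolding A_def by auto
  qed
  have bdd: "bdd_above A" using ub[OF _ a] by (auto simp: bdd_above_def)
  have Ane: "A \<noteq> {}" by (simp add: A_def)
  have mu0: "0 \<le> \<mu>" unfolding \<mu>_def using cSup_upper[OF _ bdd, of 0] by (simp add: A_def)
  have muub: "\<mu> \<le> (F y2 - F z) / (- G y2)" if "y2 \<in> D" "G y2 < 0" for y2
    unfolding \<mu>_def using cSup_least[OF Ane] ub that by blast
  have mulb: "(F z - F y) / G y \<le> \<mu>" if "y \<in> D" "0 < G y" for y
    unfolding \<mu>_def using that by (intro cSup_upper[OF _ bdd]) (auto simp: A_def)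
  show ?thesis
  proof (intro exI conjI ballI)
    show "0 \<le> \<mu>" by (rule mu0)
    show "\<mu> * G z = 0"
    proof (cases "G z < 0")
      case True
      then have "\<mu> \<le> 0" using muub[OF z(1)] by simp
      then show ?thesis using mu0 by simp
    next
      case False then show ?thesis using z by simp
    qed
  next
    fix y assume y: "y \<in> D"
    consider "0 < G y" | "G y = 0" | "G y < 0" by linarith
    then show "F z \<le> F y + \<mu> * G y"
    proof cases
      case 1 then show ?thesis using mulb[OF y 1] by (simp add: divide_simps mult.commute)
    next
      case 2 then show ?thesis using opt y by simp
    next
      case 3 then show ?thesis using muub[OF y 3] by (simp add: divide_simps mult.commute)
    qed
  qed
qed

lemma convex_sublevel_on:
  assumes "convex D" "convex_on D G"
  shows "convex {y\<in>D. G y \<le> (0::real)}"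
proof (rule convexI)
  fix x y :: 'a and u v :: real
  assume x: "x \<in> {y\<in>D. G y \<le> 0}" and y: "y \<in> {y\<in>D. G y \<le> 0}" and uv: "0 \<le> u" "0 \<le> v" "u + v = 1"
  have "u *\<^sub>R x + v *\<^sub>R y \<in> D" using assms(1) x y uv by (auto dest: convexD)
  moreover have "G (u *\<^sub>R x + v *\<^sub>R y) \<le> u * G x + v * G y"
    using assms(2) x y uv unfolding convex_on_def by blast
  moreover have "u * G x + v * G y \<le> 0" using x y uv by (simp add: add_nonpos_nonpos mult_nonneg_nonpos)
  ultimately show "u *\<^sub>R x + v *\<^sub>R y \<in> {y\<in>D. G y \<le> 0}" by simp
qed

lemma convex_on_Int_sub:
  assumes "convex_on D F" "convex D'" "D' \<subseteq> D"
  shows "convex_on D' F"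
  using assms convex_on_subset by blast

lemma MC:
  fixes F :: "'a::real_vector \<Rightarrow> real" and G :: "nat \<Rightarrow> 'a \<Rightarrow> real"
  assumes I: "finite I" and D: "convex D"
  shows "convex_on D F \<Longrightarrow> (\<forall>i\<in>I. convex_on D (G i)) \<Longrightarrow> a \<in> D \<Longrightarrow> (\<forall>i\<in>I. G i a < 0) \<Longrightarrow>
    z \<in> D \<Longrightarrow> (\<forall>i\<in>I. G i z \<le> 0) \<Longrightarrow> (\<forall>y\<in>D. (\<forall>i\<in>I. G i y \<le> 0) \<longrightarrow> F z \<le> F y) \<Longrightarrow>
    \<exists>lam. (\<forall>i\<in>I. 0 \<le> lam i \<and> lam i * G i z = 0) \<and> (\<forall>y\<in>D. F z \<le> F y + (\<Sum>i\<in>I. lam i * G i y))"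
  using I
proof (induction I arbitrary: F rule: finite_induct)
  case empty
  then show ?case by auto
next
  case (insert j I F)
  define D' where "D' = {y\<in>D. \<forall>i\<in>I. G i y \<le> 0}"
  have D'eq: "D' = D \<inter> (\<Inter>i\<in>I. {y\<in>D. G i y \<le> 0})" by (auto simp: D'_def)
  have cD': "convex D'" unfolding D'eq
    using D insert.prems(2) by (intro convex_Int convex_INT ballI convex_sublevel_on) auto
  have sD': "D' \<subseteq> D" by (auto simp: D'_def)
  obtain mu where mu: "0 \<le> mu" "mu * G j z = 0" "\<forall>y\<in>D'. F z \<le> F y + mu * G j y"
  proof -
    have "\<exists>mu\<ge>0. mu * G j z = 0 \<and> (\<forall>y\<in>D'. F z \<le> F y + mu * G j y)"
      by (rule OC[OF cD' convex_on_subset[OF insert.prems(1) sD' cD']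
            convex_on_subset[OF insert.prems(2)[rule_format, OF insertI1] sD' cD']])
         (use insert.prems in \<open>auto simp: D'_def\<close>)
    then show ?thesis using that by blast
  qed
  define F' where "F' y = F y + mu * G j y" for y
  have cF': "convex_on D F'" unfolding F'_def
    using insert.prems(1,2) mu(1) by (intro convex_on_add convex_on_cmul) auto
  have "\<exists>lam. (\<forall>i\<in>I. 0 \<le> lam i \<and> lam i * G i z = 0) \<and> (\<forall>y\<in>D. F' z \<le> F' y + (\<Sum>i\<in>I. lam i * G i y))"
  proof (rule insert.IH[OF cF'])
    show "\<forall>y\<in>D. (\<forall>i\<in>I. G i y \<le> 0) \<longrightarrow> F' z \<le> F' y"
      using mu(2,3) by (auto simp: F'_def D'_def)
  qed (use insert.prems in auto)
  then obtain lam where lam: "\<forall>i\<in>I. 0 \<le> lam i \<and> lam i * G i z = 0"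
    "\<forall>y\<in>D. F' z \<le> F' y + (\<Sum>i\<in>I. lam i * G i y)" by blast
  show ?case
  proof (intro exI[of _ "lam(j := mu)"] conjI ballI)
    fix i assume "i \<in> insert j I"
    then show "0 \<le> (lam(j := mu)) i" "(lam(j := mu)) i * G i z = 0"
      using lam(1) mu insert.hyps by auto
  next
    fix y assume y: "y \<in> D"
    have s: "(\<Sum>i\<in>insert j I. (lam(j := mu)) i * G i y) = mu * G j y + (\<Sum>i\<in>I. lam i * G i y)"
      using insert.hyps by (simp add: sum.insert) (intro sum.cong, auto)
    show "F z \<le> F y + (\<Sum>i\<in>insert j I. (lam(j := mu)) i * G i y)"
      unfolding s using lam(2) y mu(2) by (auto simp: F'_def)
  qed
qed

lemma SR:
  fixes C k :: "'a::euclidean_space \<Rightarrow> real"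
  assumes D: "convex D" and C: "convex_on D C" and z: "z \<in> D" and k: "convex_on UNIV k"
    and opt: "\<forall>y\<in>D. C z + k z \<le> C y + k y"
  shows "\<exists>v. (\<forall>y\<in>D. C z - v \<bullet> (y - z) \<le> C y) \<and> (\<forall>y. k z + v \<bullet> (y - z) \<le> k y)"
proof -
  define S where "S = {p::'a\<times>real. fst p \<in> D \<and> C (fst p) - C z < snd p}"
  define T where "T = {p::'a\<times>real. snd p \<le> k z - k (fst p)}"
  have cS: "convex S"
  proof (rule convexI)
    fix p q :: "'a \<times> real" and u v :: real
    assume p: "p \<in> S" and q: "q \<in> S" and uv: "0 \<le> u" "0 \<le> v" "u + v = 1"
    have inD: "u *\<^sub>R fst p + v *\<^sub>R fst q \<in> D" using D p q uv by (auto simp: S_def dest: convexD)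
    have "C (u *\<^sub>R fst p + v *\<^sub>R fst q) \<le> u * C (fst p) + v * C (fst q)"
      using C p q uv unfolding convex_on_def S_def by blast
    moreover have "u * (C (fst p) - C z) + v * (C (fst q) - C z) < u * snd p + v * snd q"
    proof (cases "u = 0")
      case True then show ?thesis using uv q by (simp add: S_def)
    next
      case False
      then have "u * (C (fst p) - C z) < u * snd p" using uv p by (intro mult_strict_left_mono) (auto simp: S_def)
      moreover have "v * (C (fst q) - C z) \<le> v * snd q" using uv q by (intro mult_left_mono) (auto simp: S_def)
      ultimately show ?thesis by linarith
    qed
    moreover have "u * (C (fst p) - C z) + v * (C (fst q) - C z) = u * C (fst p) + v * C (fst q) - C z"
      using uv by (simp add: algebra_simps) (metis add.commute distrib_right mult_1 uv(3))
    ultimately show "u *\<^sub>R p + v *\<^sub>R q \<in> S" using inD by (simp add: S_def)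
  qed
  have cT: "convex T"
  proof (rule convexI)
    fix p q :: "'a \<times> real" and u v :: real
    assume p: "p \<in> T" and q: "q \<in> T" and uv: "0 \<le> u" "0 \<le> v" "u + v = 1"
    have "k (u *\<^sub>R fst p + v *\<^sub>R fst q) \<le> u * k (fst p) + v * k (fst q)"
      using k uv unfolding convex_on_def by blast
    moreover have "u * k (fst p) \<le> u * (k z - snd p)" using p uv by (intro mult_left_mono) (auto simp: T_def)
    moreover have "v * k (fst q) \<le> v * (k z - snd q)" using q uv by (intro mult_left_mono) (auto simp: T_def)
    moreover have "u * (k z - snd p) + v * (k z - snd q) = k z - (u * snd p + v * snd q)"
      using uv by (simp add: algebra_simps) (metis add.commute distrib_right mult_1 uv(3))
    ultimately show "u *\<^sub>R p + v *\<^sub>R q \<in> T" by (simp add: T_def)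
  qed
  have "(z, 1) \<in> S" using z by (simp add: S_def)
  then have Sne: "S \<noteq> {}" by blast
  have Tne: "T \<noteq> {}" by (auto simp: T_def intro!: exI[of _ "(z, 0)"])
  have disj: "T \<inter> S = {}"
  proof (rule ccontr)
    assume "T \<inter> S \<noteq> {}"
    then obtain p where "p \<in> T" "p \<in> S" by blast
    then have "fst p \<in> D" "C (fst p) + k (fst p) < C z + k z" by (auto simp: S_def T_def)
    then show False using opt by fastforce
  qed
  obtain a b where ab: "a \<noteq> 0" "\<forall>x\<in>T. a \<bullet> x \<le> b" "\<forall>x\<in>S. a \<bullet> x \<ge> b"
    using separating_hyperplane_sets[OF cT cS Tne Sne disj] by blast
  obtain w \<beta> where a: "a = (w, \<beta>)" by (cases a)
  have T1: "w \<bullet> y + \<beta> * r \<le> b" if "r \<le> k z - k y" for y r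
    using ab(2) that by (force simp: T_def a inner_Pair)
  have S1: "b \<le> w \<bullet> y + \<beta> * r" if "y \<in> D" "C y - C z < r" for y r
    using ab(3) that by (force simp: S_def a inner_Pair)
  have wz: "w \<bullet> z \<le> b" using T1[of 0 z] by simp
  have b0: "\<beta> \<ge> 0"
  proof (rule ccontr)
    assume neg: "\<not> \<beta> \<ge> 0"
    define r where "r = max 1 ((b - w \<bullet> z) / \<beta> + 1)"
    have "\<beta> * r \<le> \<beta> * ((b - w \<bullet> z) / \<beta> + 1)" using neg by (intro mult_left_mono_neg) (auto simp: r_def)
    also have "\<dots> = b - w \<bullet> z + \<beta>" using neg by (simp add: field_simps)
    finally have "w \<bullet> z + \<beta> * r < b" using neg by simp
    moreover have "b \<le> w \<bullet> z + \<beta> * r" using S1[OF z, of r] by (simp add: r_def)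
    ultimately show False by simp
  qed
  have bpos: "\<beta> > 0"
  proof (rule ccontr)
    assume "\<not> \<beta> > 0"
    then have b0': "\<beta> = 0" using b0 by simp
    then have w0: "w \<noteq> 0" using ab(1) a by (auto simp: zero_prod_def)
    define y where "y = z + ((\<bar>b - w \<bullet> z\<bar> + 1) / (w \<bullet> w)) *\<^sub>R w"
    have ww: "w \<bullet> w > 0" using w0 by simp
    have "w \<bullet> y = w \<bullet> z + (\<bar>b - w \<bullet> z\<bar> + 1)" using ww by (simp add: y_def inner_add_right)
    then have "w \<bullet> y > b" by linarith
    moreover have "w \<bullet> y \<le> b" using T1[of "k z - k y" y] b0' by simp
    ultimately show False by simp
  qed
  have bz: "b \<le> w \<bullet> z"
  proof -
    have "0 \<le> (w \<bullet> z - b) + t * \<beta>" if "0 < t" "t \<le> 1" for t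
      using S1[OF z, of t] that by (simp add: mult.commute)
    then have "0 \<le> w \<bullet> z - b" by (rule small_pos_le)
    then show ?thesis by simp
  qed
  define v where "v = (1 / \<beta>) *\<^sub>R w"
  have vin: "v \<bullet> (y - z) = (w \<bullet> (y - z)) / \<beta>" for y by (simp add: v_def)
  show ?thesis
  proof (intro exI[of _ v] conjI allI ballI)
    fix y assume y: "y \<in> D"
    have "0 \<le> (w \<bullet> (y - z) + \<beta> * (C y - C z)) + t * \<beta>" if "0 < t" "t \<le> 1" for t
      using S1[OF y, of "C y - C z + t"] that wz by (simp add: inner_diff_right algebra_simps)
    then have "0 \<le> w \<bullet> (y - z) + \<beta> * (C y - C z)" by (rule small_pos_le)
    then have "0 \<le> (w \<bullet> (y - z)) / \<beta> + (C y - C z)" using bpos by (simp add: field_simps)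
    then show "C z - v \<bullet> (y - z) \<le> C y" unfolding vin by simp
  next
    fix y
    have "w \<bullet> y + \<beta> * (k z - k y) \<le> w \<bullet> z" using T1[of "k z - k y" y] bz by simp
    then have "w \<bullet> (y - z) \<le> \<beta> * (k y - k z)" by (simp add: inner_diff_right algebra_simps)
    then have "(w \<bullet> (y - z)) / \<beta> \<le> k y - k z" using bpos by (simp add: field_simps)
    then show "k z + v \<bullet> (y - z) \<le> k y" unfolding vin by simp
  qed
qed

lemma subgrad_ne:
  fixes k :: "'a::euclidean_space \<Rightarrow> real"
  assumes "convex_on UNIV k"
  shows "\<exists>v. \<forall>y. k z + v \<bullet> (y - z) \<le> k y"
proof -
  have "\<exists>v. (\<forall>y\<in>{z}. (0::real) - v \<bullet> (y - z) \<le> 0) \<and> (\<forall>y. k z + v \<bullet> (y - z) \<le> k y)"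
    by (rule SR[where C="\<lambda>_. 0"]) (auto simp: convex_on_const assms)
  then show ?thesis by blast
qed

lemma convex_on_wsum:
  fixes k :: "nat \<Rightarrow> 'a::real_vector \<Rightarrow> real"
  assumes "finite I" "\<forall>i\<in>I. convex_on UNIV (k i)" "\<forall>i\<in>I. 0 \<le> lam i"
  shows "convex_on UNIV (\<lambda>y. \<Sum>i\<in>I. lam i * k i y)"
  using assms
proof (induction I rule: finite_induct)
  case empty then show ?case by (simp add: convex_on_const)
next
  case (insert j I)
  then show ?case by (simp add: sum.insert) (intro convex_on_add convex_on_cmul, auto)
qed

lemma SRI:
  fixes C :: "'a::euclidean_space \<Rightarrow> real" and k :: "nat \<Rightarrow> 'a \<Rightarrow> real"
  assumes I: "finite I" and D: "convex D"
  shows "convex_on D C \<Longrightarrow> z \<in> D \<Longrightarrow> (\<forall>i\<in>I. convex_on UNIV (k i)) \<Longrightarrow> (\<forall>i\<in>I. 0 \<le> lam i) \<Longrightarrow>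
    (\<forall>y\<in>D. C z + p \<bullet> z + (\<Sum>i\<in>I. lam i * k i z) \<le> C y + p \<bullet> y + (\<Sum>i\<in>I. lam i * k i y)) \<Longrightarrow>
    \<exists>g0 g. (\<forall>y\<in>D. C z + g0 \<bullet> (y - z) \<le> C y) \<and> (\<forall>i\<in>I. \<forall>y. k i z + g i \<bullet> (y - z) \<le> k i y)
       \<and> p + g0 + (\<Sum>i\<in>I. lam i *\<^sub>R g i) = 0"
  using I
proof (induction I arbitrary: p rule: finite_induct)
  case empty
  show ?case
  proof (intro exI conjI ballI)
    fix y assume "y \<in> D"
    then have "C z + p \<bullet> z \<le> C y + p \<bullet> y" using empty.prems(5) by simp
    then show "C z + (- p) \<bullet> (y - z) \<le> C y" by (simp add: inner_diff_right)
  qed auto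
next
  case (insert j I p)
  define C' where "C' y = C y + p \<bullet> y + (\<Sum>i\<in>I. lam i * k i y)" for y
  have cC': "convex_on D C'" unfolding C'_def
  proof (intro convex_on_add)
    show "convex_on D C" by (rule insert.prems(1))
    show "convex_on D ((\<bullet>) p)"
      by (rule convex_onI) (auto simp: D inner_add_right algebra_simps)
    show "convex_on D (\<lambda>y. \<Sum>i\<in>I. lam i * k i y)"
      using convex_on_wsum[OF insert.hyps(1), of k lam] insert.prems(3,4) D
      by (auto intro: convex_on_subset)
  qed
  have ck: "convex_on UNIV (\<lambda>y. lam j * k j y)" using insert.prems(3,4) by (intro convex_on_cmul) auto
  have opt': "\<forall>y\<in>D. C' z + lam j * k j z \<le> C' y + lam j * k j y"
    using insert.prems(5) insert.hyps by (simp add: C'_def algebra_simps)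
  obtain v where v1: "\<forall>y\<in>D. C' z - v \<bullet> (y - z) \<le> C' y" and v2: "\<forall>y. lam j * k j z + v \<bullet> (y - z) \<le> lam j * k j y"
    using SR[OF D cC' insert.prems(2) ck opt'] by blast
  have "\<exists>g0 g. (\<forall>y\<in>D. C z + g0 \<bullet> (y - z) \<le> C y) \<and> (\<forall>i\<in>I. \<forall>y. k i z + g i \<bullet> (y - z) \<le> k i y)
       \<and> (p + v) + g0 + (\<Sum>i\<in>I. lam i *\<^sub>R g i) = 0"
  proof (rule insert.IH)
    show "\<forall>y\<in>D. C z + (p + v) \<bullet> z + (\<Sum>i\<in>I. lam i * k i z) \<le> C y + (p + v) \<bullet> y + (\<Sum>i\<in>I. lam i * k i y)"
      using v1 by (auto simp: C'_def inner_add_left inner_diff_right algebra_simps)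
  qed (use insert.prems in auto)
  then obtain g0 g where g0: "\<forall>y\<in>D. C z + g0 \<bullet> (y - z) \<le> C y"
    and g: "\<forall>i\<in>I. \<forall>y. k i z + g i \<bullet> (y - z) \<le> k i y"
    and sum0: "(p + v) + g0 + (\<Sum>i\<in>I. lam i *\<^sub>R g i) = 0" by blast
  obtain gj where gj: "\<forall>y. k j z + gj \<bullet> (y - z) \<le> k j y" and gjv: "lam j *\<^sub>R gj = v"
  proof (cases "lam j = 0")
    case True
    have "v \<bullet> v \<le> 0" using v2[rule_format, of "z + v"] True by simp
    then have "v = 0" using inner_gt_zero_iff[of v] by linarith
    obtain gj where "\<forall>y. k j z + gj \<bullet> (y - z) \<le> k j y"
      using subgrad_ne[of "k j" z] insert.prems(3) by auto
    then show ?thesis using that True \<open>v = 0\<close> by simp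
  next
    case False
    then have lp: "lam j > 0" using insert.prems(4) by (simp add: order_le_less)
    show ?thesis
    proof (rule that[of "(1 / lam j) *\<^sub>R v"])
      show "\<forall>y. k j z + ((1 / lam j) *\<^sub>R v) \<bullet> (y - z) \<le> k j y"
      proof
        fix y
        have "v \<bullet> (y - z) \<le> lam j * (k j y - k j z)" using v2[rule_format, of y] by (simp add: algebra_simps)
        then have "(v \<bullet> (y - z)) / lam j \<le> k j y - k j z" using lp by (simp add: field_simps)
        then show "k j z + ((1 / lam j) *\<^sub>R v) \<bullet> (y - z) \<le> k j y" by simp
      qed
      show "lam j *\<^sub>R ((1 / lam j) *\<^sub>R v) = v" using lp by simp
    qed
  qed
  show ?case
  proof (intro exI[of _ g0] exI[of _ "g(j := gj)"] conjI ballI allI)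
    fix y assume "y \<in> D" then show "C z + g0 \<bullet> (y - z) \<le> C y" using g0 by blast
  next
    fix i y assume "i \<in> insert j I"
    then show "k i z + (g(j := gj)) i \<bullet> (y - z) \<le> k i y" using g gj by auto
  next
    have "(\<Sum>i\<in>insert j I. lam i *\<^sub>R (g(j := gj)) i) = lam j *\<^sub>R gj + (\<Sum>i\<in>I. lam i *\<^sub>R g i)"
      using insert.hyps by (simp add: sum.insert) (intro sum.cong, auto)
    then show "p + g0 + (\<Sum>i\<in>insert j I. lam i *\<^sub>R (g(j := gj)) i) = 0"
      using sum0 gjv by (simp add: algebra_simps)
  qed
qed

lemma closed_sub_lsc:
  fixes q :: "'a::metric_space \<Rightarrow> real" and C :: "'a \<Rightarrow> ereal"
  assumes K: "closed K" and Kd: "\<forall>x\<in>K. C x \<noteq> \<infinity> \<and> C x \<noteq> -\<infinity>"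
    and q: "continuous_on UNIV q" and lsc: "\<forall>c. closed {x. C x \<le> c}"
  shows "closed {x\<in>K. q x + real_of_ereal (C x) \<le> c}"
  unfolding closed_sequential_limits
proof (intro allI impI)
  fix s l assume sl: "(\<forall>n. s n \<in> {x\<in>K. q x + real_of_ereal (C x) \<le> c}) \<and> s \<longlonglongrightarrow> l"
  then have sK: "\<forall>n. s n \<in> K" and sle: "\<forall>n. q (s n) + real_of_ereal (C (s n)) \<le> c"
    and lim: "s \<longlonglongrightarrow> l" by auto
  have lK: "l \<in> K" using Lim_in_closed_set[OF K _ _ lim] sK by auto
  have "isCont q l" using q by (simp add: continuous_on_eq_continuous_at)
  then have qlim: "(\<lambda>n. q (s n)) \<longlonglongrightarrow> q l" using isCont_tendsto_compose lim by blast
  have "q l + real_of_ereal (C l) \<le> c + e" if e: "0 < e" for e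
  proof -
    have ev: "eventually (\<lambda>n. q l - e < q (s n)) sequentially"
      using order_tendstoD(1)[OF qlim, of "q l - e"] e by simp
    have "eventually (\<lambda>n. s n \<in> {x. C x \<le> ereal (c - q l + e)}) sequentially"
    proof (rule eventually_mono[OF ev])
      fix n assume lt: "q l - e < q (s n)"
      have "real_of_ereal (C (s n)) \<le> c - q (s n)" using sle[rule_format, of n] by simp
      also have "\<dots> \<le> c - q l + e" using lt by simp
      finally have le: "real_of_ereal (C (s n)) \<le> c - q l + e" .
      have "C (s n) \<noteq> \<infinity>" "C (s n) \<noteq> -\<infinity>" using Kd sK by auto
      then have eq: "C (s n) = ereal (real_of_ereal (C (s n)))" by (cases "C (s n)") auto
      show "s n \<in> {x. C x \<le> ereal (c - q l + e)}" unfolding mem_Collect_eq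
        by (subst eq) (use le in simp)
    qed
    then have "l \<in> {x. C x \<le> ereal (c - q l + e)}"
      by (rule Lim_in_closed_set[OF lsc[rule_format] _ _ lim]) simp
    moreover have "C l \<noteq> \<infinity>" "C l \<noteq> -\<infinity>" using Kd lK by auto
    then have "C l = ereal (real_of_ereal (C l))" by (cases "C l") auto
    ultimately have "ereal (real_of_ereal (C l)) \<le> ereal (c - q l + e)" by simp
    then show ?thesis by simp
  qed
  then have "q l + real_of_ereal (C l) \<le> c" by (rule field_le_epsilon)
  then show "l \<in> {x\<in>K. q x + real_of_ereal (C x) \<le> c}" using lK by simp
qed

lemma lsc_min_exists:
  fixes h :: "'a::topological_space \<Rightarrow> real"
  assumes K: "compact K" "K \<noteq> {}" and cl: "\<forall>c. closed {x\<in>K. h x \<le> c}"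
  shows "\<exists>z\<in>K. \<forall>y\<in>K. h z \<le> h y"
proof -
  have "K \<inter> (\<Inter>y\<in>K. {x\<in>K. h x \<le> h y}) \<noteq> {}"
  proof (rule compact_imp_fip_image[OF K(1)])
    fix y assume "y \<in> K" then show "closed {x\<in>K. h x \<le> h y}" using cl by blast
  next
    fix I' assume I': "finite I'" "I' \<subseteq> K"
    show "K \<inter> (\<Inter>y\<in>I'. {x\<in>K. h x \<le> h y}) \<noteq> {}"
    proof (cases "I' = {}")
      case True then show ?thesis using K by simp
    next
      case False
      have "Min (h ` I') \<in> h ` I'" using I' False by (intro Min_in) auto
      then obtain y0 where y0I: "y0 \<in> I'" and y0m: "h y0 = Min (h ` I')" by auto
      have "\<forall>y\<in>I'. h y0 \<le> h y" unfolding y0m using I' by auto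
      note y0 = y0I this
      then have "y0 \<in> K \<inter> (\<Inter>y\<in>I'. {x\<in>K. h x \<le> h y})" using I' by auto
      then show ?thesis by blast
    qed
  qed
  then show ?thesis by blast
qed




theorem mainTheorem3:
  fixes f :: "nat \<Rightarrow> 'a::euclidean_space \<Rightarrow> real"
    and gradf :: "nat \<Rightarrow> 'a \<Rightarrow> 'a"
    and L :: "nat \<Rightarrow> real"
    and chi0 :: "'a \<Rightarrow> ereal"
    and chi :: "nat \<Rightarrow> 'a \<Rightarrow> real"
    and eta :: "nat \<Rightarrow> real"
    and m :: nat
    and x0 :: 'a
    and etas :: "nat \<Rightarrow> nat \<Rightarrow> real"
  assumes chi0_proper: "proper_fun chi0"
    and chi0_convex: "econvex chi0"
    and chi0_lsc: "elsc chi0"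
    and chi_convex: "\<forall>i\<in>{1..m}. convex_on UNIV (chi i)"
    and chi_cont: "\<forall>i\<in>{1..m}. continuous_on (edom chi0) (chi i)"
    and f_diff: "\<forall>i\<in>{0..m}. \<forall>x\<in>edom chi0. (f i has_derivative (\<lambda>h. gradf i x \<bullet> h)) (at x)"
    and f_lip: "\<forall>i\<in>{0..m}. (L i)-lipschitz_on (edom chi0) (gradf i)"
    and opt_finite: "\<bar>(INF x\<in>feas_set f chi0 chi eta m. psi0 f chi0 x)\<bar> \<noteq> \<infinity>"
    and feas_nonempty: "feas_set f chi0 chi eta m \<noteq> {}"
    and feas_compact: "compact (feas_set f chi0 chi eta m)"
    and x0_dom: "x0 \<in> edom chi0"
    and x0_strict: "\<forall>i\<in>{1..m}. psi f chi i x0 < etas 0 i"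
    and eta0_lt: "\<forall>i\<in>{1..m}. etas 0 i < eta i"
    and etas_step: "\<forall>k. \<forall>i\<in>{1..m}. etas k i < etas (Suc k) i \<and> etas (Suc k) i < eta i"
  shows "(\<exists>x :: nat \<Rightarrow> 'a. x 0 = x0 \<and>
            (\<forall>k. sub_min f gradf L chi0 chi m (x k) (etas k) (x (Suc k))))
       \<and> (\<forall>x :: nat \<Rightarrow> 'a. x 0 = x0 \<and>
            (\<forall>k. sub_min f gradf L chi0 chi m (x k) (etas k) (x (Suc k))) \<longrightarrow>
              (\<forall>k. sub_feas f gradf L chi0 chi m (x k) (etas k) \<noteq> {})
            \<and> (\<forall>k. x k \<in> feas_set f chi0 chi eta m)
            \<and> (\<forall>k. ereal (L 0 / 2 * (norm (x (Suc k) - x k))\<^sup>2)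
                     \<le> psi0 f chi0 (x k) - psi0 f chi0 (x (Suc k)))
            \<and> decseq (\<lambda>k. psi0 f chi0 (x k))
            \<and> (\<exists>l::real. (\<lambda>k. psi0 f chi0 (x k)) \<longlonglongrightarrow> ereal l)
            \<and> (\<forall>k. \<exists>lam. sub_multiplier f gradf L chi0 chi m (x k) (etas k) (x (Suc k)) lam))"
proof -
  define Cr where "Cr = (\<lambda>x. real_of_ereal (chi0 x))"
  have Dc: "convex (edom chi0)" and Cconv: "convex_on (edom chi0) Cr"
    using chi0_convex by (auto simp: econvex_def Cr_def)
  have Cfin: "chi0 x = ereal (Cr x)" if "x \<in> edom chi0" for x
  proof -
    have "chi0 x \<noteq> \<infinity>" "chi0 x \<noteq> -\<infinity>" using that chi0_proper by (auto simp: edom_def proper_fun_def)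
    then show ?thesis by (cases "chi0 x") (auto simp: Cr_def)
  qed
  have Lnn: "0 \<le> L i" if "i \<in> {0..m}" for i using f_lip that by (auto simp: lipschitz_on_def)
  have desc: "f i y \<le> qmodel f gradf L x i y" if "i \<in> {0..m}" "x \<in> edom chi0" "y \<in> edom chi0" for i x y
    using descent[OF Dc that(2,3), of "f i" "gradf i" "L i"] f_diff f_lip that(1)
    by (simp add: qmodel_def)
  have qmself: "qmodel f gradf L x i x = f i x" for x i by (simp add: qmodel_def)
  have qmexp: "qmodel f gradf L xk i (z + t *\<^sub>R (y - z)) = qmodel f gradf L xk i z
      + t * ((gradf i xk + L i *\<^sub>R (z - xk)) \<bullet> (y - z)) + t\<^sup>2 * (L i / 2 * (norm (y - z))\<^sup>2)" for xk i z t y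
  proof -
    have "qmodel f gradf L xk i (z + t *\<^sub>R (y - z)) = qmodel f gradf L xk i z
      + (gradf i xk + L i *\<^sub>R (z - xk)) \<bullet> (t *\<^sub>R (y - z)) + L i / 2 * (norm (t *\<^sub>R (y - z)))\<^sup>2"
      unfolding qmodel_def
      using quad_expand[of "f i xk" "gradf i xk" "z + t *\<^sub>R (y - z)" xk "L i" z] by simp
    moreover have "(norm (t *\<^sub>R (y - z)))\<^sup>2 = t\<^sup>2 * (norm (y - z))\<^sup>2" by (simp add: power_mult_distrib)
    moreover have "(gradf i xk + L i *\<^sub>R (z - xk)) \<bullet> (t *\<^sub>R (y - z)) = t * ((gradf i xk + L i *\<^sub>R (z - xk)) \<bullet> (y - z))"
      by (rule inner_scaleR_right)
    moreover have "L i / 2 * (t\<^sup>2 * (norm (y - z))\<^sup>2) = t\<^sup>2 * (L i / 2 * (norm (y - z))\<^sup>2)" by simp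
    ultimately show ?thesis by metis
  qed
  have qmfun: "qmodel f gradf L xk i = (\<lambda>y. f i xk + gradf i xk \<bullet> (y - xk) + L i / 2 * (norm (y - xk))\<^sup>2)" for xk i
    by (rule ext) (simp add: qmodel_def)
  have qmconv: "convex_on UNIV (qmodel f gradf L xk i)" if "i \<in> {0..m}" for xk i
    unfolding qmfun by (rule convex_on_qm[OF Lnn[OF that]])
  have qmcont: "continuous_on UNIV (qmodel f gradf L xk i)" for xk i
    unfolding qmfun by (intro continuous_intros)
  have psikconv: "convex_on UNIV (psik f gradf L chi xk i)" if "i \<in> {1..m}" for xk i
  proof -
    have "convex_on UNIV (\<lambda>y. qmodel f gradf L xk i y + chi i y)"
      using that chi_convex by (intro convex_on_add qmconv) auto
    moreover have "psik f gradf L chi xk i = (\<lambda>y. qmodel f gradf L xk i y + chi i y)"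
      by (rule ext) (simp add: psik_def)
    ultimately show ?thesis by simp
  qed
  have lsc: "\<forall>c. closed {x. chi0 x \<le> c}" using chi0_lsc by (simp add: elsc_def)
  have feas_edom: "feas_set f chi0 chi eta m \<subseteq> edom chi0" by (auto simp: feas_set_def)
  have step: "sub_feas f gradf L chi0 chi m xk ek \<noteq> {} \<and> (\<exists>z. sub_min f gradf L chi0 chi m xk ek z)
     \<and> (\<forall>z. sub_min f gradf L chi0 chi m xk ek z \<longrightarrow> z \<in> feas_set f chi0 chi eta m
          \<and> (\<forall>i\<in>{1..m}. psi f chi i z \<le> ek i)
          \<and> f 0 z + Cr z + L 0 / 2 * (norm (z - xk))\<^sup>2 \<le> f 0 xk + Cr xk
          \<and> (\<exists>lam. sub_multiplier f gradf L chi0 chi m xk ek z lam))"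
    if xk: "xk \<in> edom chi0" and sl: "\<forall>i\<in>{1..m}. psi f chi i xk < ek i"
      and le: "\<forall>i\<in>{1..m}. ek i \<le> eta i" for xk ek
  proof -
    define K where "K = sub_feas f gradf L chi0 chi m xk ek"
    have psi_le: "psi f chi i y \<le> psik f gradf L chi xk i y" if "i \<in> {1..m}" "y \<in> edom chi0" for i y
      using desc[of i xk y] that xk by (simp add: psi_def psik_def)
    have xkK: "xk \<in> K" using xk sl by (auto simp: K_def sub_feas_def psik_def qmself psi_def less_imp_le)
    have KF: "K \<subseteq> feas_set f chi0 chi eta m"
    proof
      fix y assume "y \<in> K"
      then have y: "y \<in> edom chi0" "\<forall>i\<in>{1..m}. psik f gradf L chi xk i y \<le> ek i"
        by (auto simp: K_def sub_feas_def)
      have "\<forall>i\<in>{1..m}. psi f chi i y \<le> eta i"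
        using psi_le y le by (meson order_trans)
      then show "y \<in> feas_set f chi0 chi eta m" using y by (simp add: feas_set_def)
    qed
    have KE: "K \<subseteq> edom chi0" using KF feas_edom by blast
    have Keq: "K = feas_set f chi0 chi eta m \<inter>
        (\<Inter>i\<in>{1..m}. feas_set f chi0 chi eta m \<inter> psik f gradf L chi xk i -` {..ek i})"
      using KF feas_edom by (auto simp: K_def sub_feas_def)
    have contpsik: "continuous_on (feas_set f chi0 chi eta m) (psik f gradf L chi xk i)" if "i \<in> {1..m}" for i
    proof -
      have "continuous_on (feas_set f chi0 chi eta m) (\<lambda>y. qmodel f gradf L xk i y + chi i y)"
        using continuous_on_subset[OF qmcont subset_UNIV] continuous_on_subset[OF chi_cont[rule_format, OF that] feas_edom]
        by (intro continuous_on_add) auto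
      moreover have "psik f gradf L chi xk i = (\<lambda>y. qmodel f gradf L xk i y + chi i y)"
        by (rule ext) (simp add: psik_def)
      ultimately show ?thesis by simp
    qed
    have Kcomp: "compact K" unfolding Keq
      using contpsik compact_imp_closed[OF feas_compact]
      by (intro compact_Int_closed[OF feas_compact] closed_INT ballI continuous_closed_preimage) auto
    have Kconv: "convex K"
    proof -
      have "K = edom chi0 \<inter> (\<Inter>i\<in>{1..m}. {y\<in>UNIV. psik f gradf L chi xk i y - ek i \<le> 0})"
        by (auto simp: K_def sub_feas_def)
      moreover have "convex_on UNIV (\<lambda>y. psik f gradf L chi xk i y - ek i)" if "i \<in> {1..m}" for i
      proof -
        have "convex_on UNIV (\<lambda>y. psik f gradf L chi xk i y + (- ek i))"
          using that by (intro convex_on_add psikconv) (simp_all add: convex_on_const)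
        then show ?thesis by simp
      qed
      ultimately show ?thesis using Dc
        by (simp only:) (intro convex_Int convex_INT ballI convex_sublevel_on, auto)
    qed
    define h where "h y = qmodel f gradf L xk 0 y + Cr y" for y
    have Kd: "\<forall>x\<in>K. chi0 x \<noteq> \<infinity> \<and> chi0 x \<noteq> -\<infinity>" using KE Cfin by auto
    have cl: "\<forall>c. closed {x\<in>K. h x \<le> c}"
      unfolding h_def Cr_def
      by (intro allI closed_sub_lsc[OF compact_imp_closed[OF Kcomp] Kd qmcont lsc])
    obtain z0 where z0: "z0 \<in> K" "\<forall>y\<in>K. h z0 \<le> h y"
      using lsc_min_exists[OF Kcomp _ cl] xkK by blast
    have psi0k_eq: "psi0k f gradf L chi0 xk y = ereal (h y)" if "y \<in> K" for y
    proof -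
      have "chi0 y = ereal (Cr y)" using Cfin[of y] KE that by blast
      then show ?thesis by (simp add: psi0k_def h_def)
    qed
    have ex: "\<exists>z. sub_min f gradf L chi0 chi m xk ek z"
    proof (intro exI[of _ z0])
      show "sub_min f gradf L chi0 chi m xk ek z0"
        unfolding sub_min_def K_def[symmetric] using z0 psi0k_eq by auto
    qed
    have all: "z \<in> feas_set f chi0 chi eta m
          \<and> (\<forall>i\<in>{1..m}. psi f chi i z \<le> ek i)
          \<and> f 0 z + Cr z + L 0 / 2 * (norm (z - xk))\<^sup>2 \<le> f 0 xk + Cr xk
          \<and> (\<exists>lam. sub_multiplier f gradf L chi0 chi m xk ek z lam)"
      if zmin: "sub_min f gradf L chi0 chi m xk ek z" for z
    proof -
      have zK: "z \<in> K" using zmin by (simp add: sub_min_def K_def)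
      have zE: "z \<in> edom chi0" using zK KE by blast
      have optr: "\<forall>y\<in>K. h z \<le> h y"
        using zmin psi0k_eq zK by (auto simp: sub_min_def K_def[symmetric])
      have zpsi: "\<forall>i\<in>{1..m}. psi f chi i z \<le> ek i"
      proof
        fix i assume i: "i \<in> {1..m}"
        have "psik f gradf L chi xk i z \<le> ek i" using zK i by (simp add: K_def sub_feas_def)
        then show "psi f chi i z \<le> ek i" using psi_le[OF i zE] by linarith
      qed
      have dec: "f 0 z + Cr z + L 0 / 2 * (norm (z - xk))\<^sup>2 \<le> f 0 xk + Cr xk"
      proof -
        have "Cr z - (gradf 0 xk + L 0 *\<^sub>R (z - xk)) \<bullet> (xk - z) \<le> Cr xk"
          by (rule CL[OF Kconv zK xkK convex_on_subset[OF Cconv KE Kconv], where Q="qmodel f gradf L xk 0"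
                and R="L 0 / 2 * (norm (xk - z))\<^sup>2"])
             (use optr in \<open>simp_all add: h_def qmexp\<close>)
        moreover have "qmodel f gradf L xk 0 xk = qmodel f gradf L xk 0 z
            + (gradf 0 xk + L 0 *\<^sub>R (z - xk)) \<bullet> (xk - z) + L 0 / 2 * (norm (xk - z))\<^sup>2"
          using qmexp[of xk 0 z 1 xk] by simp
        moreover have "f 0 z \<le> qmodel f gradf L xk 0 z" using desc[of 0 xk z] xk zE by simp
        moreover have "norm (xk - z) = norm (z - xk)" by (rule norm_minus_commute)
        ultimately show ?thesis by (simp add: qmself)
      qed
      have mult: "\<exists>lam. sub_multiplier f gradf L chi0 chi m xk ek z lam"
      proof -
        have Fconv: "convex_on (edom chi0) (\<lambda>y. qmodel f gradf L xk 0 y + Cr y)"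
          using convex_on_subset[OF qmconv[of 0 xk] subset_UNIV Dc] Cconv by (intro convex_on_add) auto
        have Gconv: "\<forall>i\<in>{1..m}. convex_on (edom chi0) (\<lambda>y. psik f gradf L chi xk i y - ek i)"
        proof
          fix i assume i: "i \<in> {1..m}"
          have "convex_on UNIV (\<lambda>y. psik f gradf L chi xk i y + (- ek i))"
            using i by (intro convex_on_add psikconv) (simp_all add: convex_on_const)
          then show "convex_on (edom chi0) (\<lambda>y. psik f gradf L chi xk i y - ek i)"
            using Dc by (auto intro: convex_on_subset)
        qed
        have "\<exists>lam. (\<forall>i\<in>{1..m}. 0 \<le> lam i \<and> lam i * (psik f gradf L chi xk i z - ek i) = 0)
           \<and> (\<forall>y\<in>edom chi0. qmodel f gradf L xk 0 z + Cr z \<le> qmodel f gradf L xk 0 y + Cr y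
                + (\<Sum>i\<in>{1..m}. lam i * (psik f gradf L chi xk i y - ek i)))"
        proof (rule MC[where I="{1..m}" and D="edom chi0" and F="\<lambda>y. qmodel f gradf L xk 0 y + Cr y"
              and G="\<lambda>i y. psik f gradf L chi xk i y - ek i" and a=xk and z=z, OF _ Dc Fconv Gconv xk _ zE])
          show "\<forall>i\<in>{1..m}. psik f gradf L chi xk i xk - ek i < 0"
            using sl by (simp add: psik_def qmself psi_def)
          show "\<forall>i\<in>{1..m}. psik f gradf L chi xk i z - ek i \<le> 0"
            using zK by (simp add: K_def sub_feas_def)
          show "\<forall>y\<in>edom chi0. (\<forall>i\<in>{1..m}. psik f gradf L chi xk i y - ek i \<le> 0) \<longrightarrow>
              qmodel f gradf L xk 0 z + Cr z \<le> qmodel f gradf L xk 0 y + Cr y"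
            using optr by (auto simp: K_def sub_feas_def h_def)
        qed simp
        then obtain lam where lam1: "\<forall>i\<in>{1..m}. 0 \<le> lam i \<and> lam i * (psik f gradf L chi xk i z - ek i) = 0"
          and lam2: "\<forall>y\<in>edom chi0. qmodel f gradf L xk 0 z + Cr z \<le> qmodel f gradf L xk 0 y + Cr y
                + (\<Sum>i\<in>{1..m}. lam i * (psik f gradf L chi xk i y - ek i))" by blast
        define Q where "Q y = qmodel f gradf L xk 0 y + (\<Sum>i\<in>{1..m}. lam i * qmodel f gradf L xk i y)" for y
        define H where "H y = Cr y + (\<Sum>i\<in>{1..m}. lam i * (chi i y - ek i))" for y
        have split: "qmodel f gradf L xk 0 y + Cr y + (\<Sum>i\<in>{1..m}. lam i * (psik f gradf L chi xk i y - ek i))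
            = Q y + H y" for y
        proof -
          have "(\<Sum>i\<in>{1..m}. lam i * (psik f gradf L chi xk i y - ek i))
              = (\<Sum>i\<in>{1..m}. lam i * qmodel f gradf L xk i y + lam i * (chi i y - ek i))"
            by (rule sum.cong) (simp_all add: psik_def algebra_simps)
          then show ?thesis by (simp add: Q_def H_def sum.distrib)
        qed
        have zsum: "(\<Sum>i\<in>{1..m}. lam i * (psik f gradf L chi xk i z - ek i)) = 0"
          using lam1 by (intro sum.neutral) blast
        have optQH: "\<forall>y\<in>edom chi0. Q z + H z \<le> Q y + H y"
          using lam2 split zsum by (metis add.right_neutral)
        define Gt where "Gt = (gradf 0 xk + L 0 *\<^sub>R (z - xk)) + (\<Sum>i\<in>{1..m}. lam i *\<^sub>R (gradf i xk + L i *\<^sub>R (z - xk)))"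
        define R where "R y = L 0 / 2 * (norm (y - z))\<^sup>2 + (\<Sum>i\<in>{1..m}. lam i * (L i / 2 * (norm (y - z))\<^sup>2))" for y
        have Qexp: "Q (z + t *\<^sub>R (y - z)) = Q z + t * (Gt \<bullet> (y - z)) + t\<^sup>2 * R y" for t y
        proof -
          have "(\<Sum>i\<in>{1..m}. lam i * qmodel f gradf L xk i (z + t *\<^sub>R (y - z)))
             = (\<Sum>i\<in>{1..m}. lam i * qmodel f gradf L xk i z + t * ((lam i *\<^sub>R (gradf i xk + L i *\<^sub>R (z - xk))) \<bullet> (y - z))
                 + t\<^sup>2 * (lam i * (L i / 2 * (norm (y - z))\<^sup>2)))"
            by (rule sum.cong) (simp_all only: qmexp, simp add: algebra_simps)
          also have "\<dots> = (\<Sum>i\<in>{1..m}. lam i * qmodel f gradf L xk i z)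
              + t * ((\<Sum>i\<in>{1..m}. lam i *\<^sub>R (gradf i xk + L i *\<^sub>R (z - xk))) \<bullet> (y - z))
              + t\<^sup>2 * (\<Sum>i\<in>{1..m}. lam i * (L i / 2 * (norm (y - z))\<^sup>2))"
            by (simp add: sum.distrib sum_distrib_left inner_sum_left)
          finally show ?thesis
            unfolding Q_def Gt_def R_def qmexp by (simp add: inner_add_left algebra_simps)
        qed
        have Hconv: "convex_on (edom chi0) H"
        proof -
          have "convex_on UNIV (\<lambda>y. \<Sum>i\<in>{1..m}. lam i * (chi i y - ek i))"
          proof (rule convex_on_wsum[where k="\<lambda>i y. chi i y - ek i"])
            show "\<forall>i\<in>{1..m}. convex_on UNIV (\<lambda>y. chi i y - ek i)"
            proof
              fix i assume "i \<in> {1..m}"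
              then have "convex_on UNIV (\<lambda>y. chi i y + (- ek i))"
                using chi_convex by (intro convex_on_add) (simp_all add: convex_on_const)
              then show "convex_on UNIV (\<lambda>y. chi i y - ek i)" by simp
            qed
          qed (use lam1 in auto)
          then show ?thesis unfolding H_def using Cconv Dc
            by (intro convex_on_add) (auto intro: convex_on_subset)
        qed
        have Hsub: "\<forall>y\<in>edom chi0. H z - Gt \<bullet> (y - z) \<le> H y"
        proof
          fix y assume y: "y \<in> edom chi0"
          show "H z - Gt \<bullet> (y - z) \<le> H y"
            by (rule CL[OF Dc zE y Hconv optQH, where R="R y"]) (simp add: Qexp)
        qed
        have Hform: "H y = Cr y + (\<Sum>i\<in>{1..m}. lam i * chi i y) - (\<Sum>i\<in>{1..m}. lam i * ek i)" for y
          by (simp add: H_def right_diff_distrib sum_subtractf)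
        have SRprem: "\<forall>y\<in>edom chi0. Cr z + Gt \<bullet> z + (\<Sum>i\<in>{1..m}. lam i * chi i z)
            \<le> Cr y + Gt \<bullet> y + (\<Sum>i\<in>{1..m}. lam i * chi i y)"
        proof
          fix y assume y: "y \<in> edom chi0"
          have "H z - Gt \<bullet> (y - z) \<le> H y" using Hsub y by blast
          then show "Cr z + Gt \<bullet> z + (\<Sum>i\<in>{1..m}. lam i * chi i z)
            \<le> Cr y + Gt \<bullet> y + (\<Sum>i\<in>{1..m}. lam i * chi i y)"
            unfolding Hform by (simp add: inner_diff_right)
        qed
        obtain g0 g where g0: "\<forall>y\<in>edom chi0. Cr z + g0 \<bullet> (y - z) \<le> Cr y"
          and g: "\<forall>i\<in>{1..m}. \<forall>y. chi i z + g i \<bullet> (y - z) \<le> chi i y"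
          and gsum: "Gt + g0 + (\<Sum>i\<in>{1..m}. lam i *\<^sub>R g i) = 0"
          using SRI[where I="{1..m}" and D="edom chi0" and C=Cr and z=z and k=chi and lam=lam and p=Gt,
              OF _ Dc Cconv zE chi_convex _ SRprem] lam1 by auto
        show ?thesis
        proof (intro exI[of _ lam])
          have g0sub: "g0 \<in> esubdiff chi0 z"
            unfolding esubdiff_def
          proof (intro CollectI allI)
            fix y
            show "chi0 z + ereal (g0 \<bullet> (y - z)) \<le> chi0 y"
            proof (cases "y \<in> edom chi0")
              case True
              then show ?thesis using g0 Cfin[OF True] Cfin[OF zE] by auto
            next
              case False
              then show ?thesis by (simp add: edom_def)
            qed
          qed
          have gsub: "\<forall>i\<in>{1..m}. g i \<in> esubdiff (\<lambda>y. ereal (chi i y)) z"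
            using g by (simp add: esubdiff_def)
          have eq: "(gradf 0 xk + L 0 *\<^sub>R (z - xk) + g0)
              + (\<Sum>i\<in>{1..m}. lam i *\<^sub>R (gradf i xk + L i *\<^sub>R (z - xk) + g i)) = 0"
          proof -
            have "(\<Sum>i\<in>{1..m}. lam i *\<^sub>R (gradf i xk + L i *\<^sub>R (z - xk) + g i))
                = (\<Sum>i\<in>{1..m}. lam i *\<^sub>R (gradf i xk + L i *\<^sub>R (z - xk))) + (\<Sum>i\<in>{1..m}. lam i *\<^sub>R g i)"
              by (simp add: scaleR_add_right sum.distrib)
            then show ?thesis using gsub gsum unfolding Gt_def by (simp add: algebra_simps)
          qed
          show "sub_multiplier f gradf L chi0 chi m xk ek z lam"
            unfolding sub_multiplier_def using lam1 g0sub gsub eq by blast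
        qed
      qed
      show ?thesis using KF zK zpsi dec mult by blast
    qed
    show ?thesis using xkK ex all unfolding K_def by blast
  qed
  have etaslt: "\<forall>i\<in>{1..m}. etas k i < eta i" for k
    using eta0_lt etas_step by (cases k) auto
  have psi0eq: "psi0 f chi0 y = ereal (f 0 y + Cr y)" if "y \<in> edom chi0" for y
    using Cfin[OF that] by (simp add: psi0_def)
  have stepI: "x (Suc k) \<in> edom chi0 \<and> (\<forall>i\<in>{1..m}. psi f chi i (x (Suc k)) < etas (Suc k) i)"
    if "x k \<in> edom chi0" "\<forall>i\<in>{1..m}. psi f chi i (x k) < etas k i"
       "sub_min f gradf L chi0 chi m (x k) (etas k) (x (Suc k))" for x k
  proof -
    have A: "x (Suc k) \<in> feas_set f chi0 chi eta m" "\<forall>i\<in>{1..m}. psi f chi i (x (Suc k)) \<le> etas k i"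
      using step[OF that(1,2)] etaslt[of k] that(3) by (auto intro: less_imp_le)
    then show ?thesis using feas_edom etas_step by (meson le_less_trans subsetD)
  qed
  have inv: "x k \<in> edom chi0 \<and> (\<forall>i\<in>{1..m}. psi f chi i (x k) < etas k i)"
    if "x 0 = x0" "\<forall>k. sub_min f gradf L chi0 chi m (x k) (etas k) (x (Suc k))" for x k
  proof (induction k)
    case 0 then show ?case using that x0_dom x0_strict by simp
  next
    case (Suc k) then show ?case using stepI[of x k] that(2) by blast
  qed
  show ?thesis
  proof (intro conjI allI impI)
    define x where "x = rec_nat x0 (\<lambda>k xk. SOME z. sub_min f gradf L chi0 chi m xk (etas k) z)"
    have x0': "x 0 = x0" by (simp add: x_def)
    have xS: "x (Suc k) = (SOME z. sub_min f gradf L chi0 chi m (x k) (etas k) z)" for k by (simp add: x_def)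
    have P: "(x k \<in> edom chi0 \<and> (\<forall>i\<in>{1..m}. psi f chi i (x k) < etas k i))
        \<and> sub_min f gradf L chi0 chi m (x k) (etas k) (x (Suc k))" for k
    proof (induction k)
      case 0
      have I0: "x 0 \<in> edom chi0 \<and> (\<forall>i\<in>{1..m}. psi f chi i (x 0) < etas 0 i)" using x0' x0_dom x0_strict by simp
      then have "\<exists>z. sub_min f gradf L chi0 chi m (x 0) (etas 0) z"
        using step[of "x 0" "etas 0"] etaslt[of 0] by (auto intro: less_imp_le)
      then show ?case unfolding xS using I0 by (metis someI_ex)
    next
      case (Suc k)
      then have I1: "x (Suc k) \<in> edom chi0 \<and> (\<forall>i\<in>{1..m}. psi f chi i (x (Suc k)) < etas (Suc k) i)"
        using stepI[of x k] by blast
      then have "\<exists>z. sub_min f gradf L chi0 chi m (x (Suc k)) (etas (Suc k)) z"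
        using step[of "x (Suc k)" "etas (Suc k)"] etaslt[of "Suc k"] by (auto intro: less_imp_le)
      then show ?case unfolding xS[of "Suc k"] using I1 by (metis someI_ex)
    qed
    show "\<exists>x. x 0 = x0 \<and> (\<forall>k. sub_min f gradf L chi0 chi m (x k) (etas k) (x (Suc k)))"
      using x0' P by blast
  next
    fix x :: "nat \<Rightarrow> 'a"
    assume H: "x 0 = x0 \<and> (\<forall>k. sub_min f gradf L chi0 chi m (x k) (etas k) (x (Suc k)))"
    then have x0': "x 0 = x0" and sm: "\<forall>k. sub_min f gradf L chi0 chi m (x k) (etas k) (x (Suc k))" by auto
    note I = inv[OF x0' sm]
    have St: "sub_feas f gradf L chi0 chi m (x k) (etas k) \<noteq> {} \<and> (\<exists>z. sub_min f gradf L chi0 chi m (x k) (etas k) z)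
     \<and> (\<forall>z. sub_min f gradf L chi0 chi m (x k) (etas k) z \<longrightarrow> z \<in> feas_set f chi0 chi eta m
          \<and> (\<forall>i\<in>{1..m}. psi f chi i z \<le> etas k i)
          \<and> f 0 z + Cr z + L 0 / 2 * (norm (z - x k))\<^sup>2 \<le> f 0 (x k) + Cr (x k)
          \<and> (\<exists>lam. sub_multiplier f gradf L chi0 chi m (x k) (etas k) z lam))" for k
      by (rule step) (use I[of k] etaslt[of k] in \<open>auto intro: less_imp_le\<close>)
    define r where "r k = f 0 (x k) + Cr (x k)" for k
    have pr: "psi0 f chi0 (x k) = ereal (r k)" for k using psi0eq I[of k] by (simp add: r_def)
    have decr: "r (Suc k) + L 0 / 2 * (norm (x (Suc k) - x k))\<^sup>2 \<le> r k" for k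
      using St[of k] sm unfolding r_def by blast
    have L0: "0 \<le> L 0" using Lnn[of 0] by simp
    have rdec: "decseq r"
    proof (rule decseq_SucI)
      fix k have "0 \<le> L 0 / 2 * (norm (x (Suc k) - x k))\<^sup>2" using L0 by simp
      then show "r (Suc k) \<le> r k" using decr[of k] by linarith
    qed
    show "sub_feas f gradf L chi0 chi m (x k) (etas k) \<noteq> {}" for k using St by blast
    have xF: "x k \<in> feas_set f chi0 chi eta m" for k
      proof (cases k)
        case 0
        have "\<forall>i\<in>{1..m}. psi f chi i x0 \<le> eta i"
          using x0_strict eta0_lt by (meson less_imp_le less_trans)
        then show ?thesis using 0 x0' x0_dom by (simp add: feas_set_def)
      next
        case (Suc j)
        then show ?thesis using St[of j] sm by blast
      qed
    show "x k \<in> feas_set f chi0 chi eta m" for k by (rule xF)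
    show "ereal (L 0 / 2 * (norm (x (Suc k) - x k))\<^sup>2) \<le> psi0 f chi0 (x k) - psi0 f chi0 (x (Suc k))" for k
      using decr[of k] by (simp add: pr)
    show "decseq (\<lambda>k. psi0 f chi0 (x k))"
      using rdec by (simp add: pr decseq_def)
    obtain V where V: "(INF x\<in>feas_set f chi0 chi eta m. psi0 f chi0 x) = ereal V"
      using opt_finite by (cases "(INF x\<in>feas_set f chi0 chi eta m. psi0 f chi0 x)") auto
    have lb: "V \<le> r k" for k
    proof -
      have "(INF x\<in>feas_set f chi0 chi eta m. psi0 f chi0 x) \<le> psi0 f chi0 (x k)"
        by (rule INF_lower[OF xF])
      then show ?thesis unfolding V pr by simp
    qed
    obtain l where "r \<longlonglongrightarrow> l" using decseq_convergent[OF rdec, of V] lb by blast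
    then have "(\<lambda>k. psi0 f chi0 (x k)) \<longlonglongrightarrow> ereal l" unfolding pr by (rule tendsto_ereal)
    then show "\<exists>l::real. (\<lambda>k. psi0 f chi0 (x k)) \<longlonglongrightarrow> ereal l" by blast
    show "\<exists>lam. sub_multiplier f gradf L chi0 chi m (x k) (etas k) (x (Suc k)) lam" for k
      using St[of k] sm by blast
  qed
qed


end
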